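(* Let $\phi$ be an LTL formula. For every $\mathbf{AX}^{fin}$-atom $V_0$ of $\phi$ there is a finite chain of $\mathbf{AX}^{fin}$-atoms $V_0,\dots,V_k$ such that $\bigcirc\mathit{false}\in V_k$.
   Context: LTL formulas: grammar $\phi ::= p\mid\neg\phi\mid\phi\wedge\psi\mid\bigcirc\phi\mid\phi\,\mathcal{U}\,\psi$ over propositions $p\in\Phi_0$; $\vee,\Rightarrow$ standard abbreviations; $\mathit{true}$ a fixed tautology, $\mathit{false}:=\neg\mathit{true}$, $\Diamond\phi:=\mathit{true}\,\mathcal{U}\,\phi$, $\overline{\bigcirc}\phi:=\neg\bigcirc\neg\phi$. $\mathbf{AX}^{fin}$ consists of Prop (all propositional tautology instances), MP (from $\phi$, $\phi\Rightarrow\psi$ infer $\psi$), T1: $\bigcirc\phi\wedge\bigcirc(\phi\Rightarrow\psi)\Rightarrow\bigcirc\psi$, T2': $\phi\,\mathcal{U}\,\psi\Leftrightarrow\psi\vee(\phi\wedge\overline{\bigcirc}(\phi\,\mathcal{U}\,\psi))$, T3': $\bigcirc\phi\Leftrightarrow(\bigcirc\mathit{false}\vee\overline{\bigcirc}\phi)$, RT1 (from $\phi$ infer $\bigcirc\phi$), RT2 (from $\phi'\Rightarrow\neg\psi\wedge\bigcirc\phi'$ infer $\phi'\Rightarrow\neg(\phi\,\mathcal{U}\,\psi)$), and Fin: $\Diamond\bigcirc\mathit{false}$. A formula is consistent if its negation is not provable; a finite set is consistent if its conjunction is. Closure: $Cl'(\phi)$ is the smallest set $S$ with $\phi\in S$;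 $\mathit{true}\,\mathcal{U}\,\bigcirc\mathit{false}\in S$; $\neg\psi\in S\Rightarrow\psi\in S$; $\psi_1\wedge\psi_2\in S\Rightarrow\psi_1,\psi_2\in S$; $\bigcirc\psi\in S\Rightarrow\psi\in S$; $\bigcirc\neg\psi\in S\Rightarrow\bigcirc\psi\in S$; $\psi_1\,\mathcal{U}\,\psi_2\in S\Rightarrow\psi_1,\psi_2,\overline{\bigcirc}(\psi_1\,\mathcal{U}\,\psi_2)\in S$. $Cl(\phi)=Cl'(\phi)\cup\{\neg\psi:\psi\in Cl'(\phi)\}$. An $\mathbf{AX}^{fin}$-atom of $\phi$ is a maximal consistent subset of $Cl(\phi)$; $\widehat V$ is the conjunction of its formulas. $V\to W$ iff $\widehat V\wedge\overline{\bigcirc}\widehat W$ is consistent. A chain is a sequence $V_0,V_1,\dots$ of atoms with $V_i\to V_{i+1}$ for consecutive indices. *)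

theory Defs
  imports Main
begin

datatype 'p ltl =
    Prop 'p
  | Neg "'p ltl"
  | And "'p ltl" "'p ltl"
  | Next "'p ltl"
  | Until "'p ltl" "'p ltl"

definition Or :: "'p ltl \<Rightarrow> 'p ltl \<Rightarrow> 'p ltl" where
  "Or a b = Neg (And (Neg a) (Neg b))"

definition Imp :: "'p ltl \<Rightarrow> 'p ltl \<Rightarrow> 'p ltl" where
  "Imp a b = Or (Neg a) b"

definition Iff :: "'p ltl \<Rightarrow> 'p ltl \<Rightarrow> 'p ltl" where
  "Iff a b = And (Imp a b) (Imp b a)"

definition TT :: "'p ltl" where
  "TT = Neg (And (Prop undefined) (Neg (Prop undefined)))"

definition FF :: "'p ltl" where
  "FF = Neg TT"

definition Ev :: "'p ltl \<Rightarrow> 'p ltl" where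
  "Ev a = Until TT a"

definition WNext :: "'p ltl \<Rightarrow> 'p ltl" where
  "WNext a = Neg (Next (Neg a))"

fun peval :: "('p ltl \<Rightarrow> bool) \<Rightarrow> 'p ltl \<Rightarrow> bool" where
  "peval v (Prop p) = v (Prop p)"
| "peval v (Neg a) = (\<not> peval v a)"
| "peval v (And a b) = (peval v a \<and> peval v b)"
| "peval v (Next a) = v (Next a)"
| "peval v (Until a b) = v (Until a b)"

definition ptaut :: "'p ltl \<Rightarrow> bool" where
  "ptaut f = (\<forall>v. peval v f)"

inductive prov :: "'p ltl \<Rightarrow> bool" where
  Prop_ax: "ptaut f \<Longrightarrow> prov f"
| MP: "prov f \<Longrightarrow> prov (Imp f g) \<Longrightarrow> prov g"
| T1: "prov (Imp (And (Next f) (Next (Imp f g))) (Next g))"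
| T2': "prov (Iff (Until f g) (Or g (And f (WNext (Until f g)))))"
| T3': "prov (Iff (Next f) (Or (Next FF) (WNext f)))"
| RT1: "prov f \<Longrightarrow> prov (Next f)"
| RT2: "prov (Imp f' (And (Neg g) (Next f'))) \<Longrightarrow> prov (Imp f' (Neg (Until f g)))"
| Fin: "prov (Ev (Next FF))"

definition consistent :: "'p ltl \<Rightarrow> bool" where
  "consistent f = (\<not> prov (Neg f))"

fun conj_list :: "'p ltl list \<Rightarrow> 'p ltl" where
  "conj_list [] = TT"
| "conj_list [x] = x"
| "conj_list (x # xs) = And x (conj_list xs)"

definition hat :: "'p ltl set \<Rightarrow> 'p ltl" where
  "hat S = conj_list (SOME xs. set xs = S \<and> distinct xs)"

definition consistent_set :: "'p ltl set \<Rightarrow> bool" where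
  "consistent_set S = (finite S \<and> consistent (hat S))"

inductive_set Cl' :: "'p ltl \<Rightarrow> 'p ltl set" for \<phi> :: "'p ltl" where
  base: "\<phi> \<in> Cl' \<phi>"
| fin: "Until TT (Next FF) \<in> Cl' \<phi>"
| neg: "Neg \<psi> \<in> Cl' \<phi> \<Longrightarrow> \<psi> \<in> Cl' \<phi>"
| and1: "And \<psi>1 \<psi>2 \<in> Cl' \<phi> \<Longrightarrow> \<psi>1 \<in> Cl' \<phi>"
| and2: "And \<psi>1 \<psi>2 \<in> Cl' \<phi> \<Longrightarrow> \<psi>2 \<in> Cl' \<phi>"
| next1: "Next \<psi> \<in> Cl' \<phi> \<Longrightarrow> \<psi> \<in> Cl' \<phi>"
| nextneg: "Next (Neg \<psi>) \<in> Cl' \<phi> \<Longrightarrow> Next \<psi> \<in> Cl' \<phi>"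
| until1: "Until \<psi>1 \<psi>2 \<in> Cl' \<phi> \<Longrightarrow> \<psi>1 \<in> Cl' \<phi>"
| until2: "Until \<psi>1 \<psi>2 \<in> Cl' \<phi> \<Longrightarrow> \<psi>2 \<in> Cl' \<phi>"
| until3: "Until \<psi>1 \<psi>2 \<in> Cl' \<phi> \<Longrightarrow> WNext (Until \<psi>1 \<psi>2) \<in> Cl' \<phi>"

definition Cl :: "'p ltl \<Rightarrow> 'p ltl set" where
  "Cl \<phi> = Cl' \<phi> \<union> Neg ` Cl' \<phi>"

definition atom :: "'p ltl \<Rightarrow> 'p ltl set \<Rightarrow> bool" where
  "atom \<phi> V = (V \<subseteq> Cl \<phi> \<and> consistent_set V \<and>
     (\<forall>W. V \<subset> W \<and> W \<subseteq> Cl \<phi> \<longrightarrow> \<not> consistent_set W))"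

definition arrow :: "'p ltl set \<Rightarrow> 'p ltl set \<Rightarrow> bool" where
  "arrow V W = consistent (And (hat V) (WNext (hat W)))"

end

theory Submission
  imports Defs
begin

lemma peval_Imp[simp]: "peval v (Imp a b) = (peval v a \<longrightarrow> peval v b)"
  by (simp add: Imp_def Or_def)
lemma peval_Or[simp]: "peval v (Or a b) = (peval v a \<or> peval v b)"
  by (simp add: Or_def)
lemma peval_TT[simp]: "peval v TT"
  by (simp add: TT_def)
lemma peval_FF[simp]: "\<not> peval v FF"
  by (simp add: FF_def)

lemma taut_cons:
  "(\<And>v. (\<forall>f\<in>set fs. peval v f) \<Longrightarrow> peval v g) \<Longrightarrow> (\<forall>f\<in>set fs. prov f) \<Longrightarrow> prov g"
proof (induction fs arbitrary: g)
  case Nil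
  then show ?case by (auto intro: prov.Prop_ax simp: ptaut_def)
next
  case (Cons f fs)
  have "prov (Imp f g)" using Cons by (intro Cons.IH) auto
  then show ?case using Cons.prems prov.MP by auto
qed

lemma taut0: "(\<And>v. peval v b) \<Longrightarrow> prov b"
  using taut_cons[of "[]" b] by auto
lemma taut1: "(\<And>v. peval v a \<Longrightarrow> peval v b) \<Longrightarrow> prov a \<Longrightarrow> prov b"
  using taut_cons[of "[a]" b] by auto
lemma taut2: "(\<And>v. peval v a \<Longrightarrow> peval v b \<Longrightarrow> peval v c) \<Longrightarrow> prov a \<Longrightarrow> prov b \<Longrightarrow> prov c"
  using taut_cons[of "[a,b]" c] by auto
lemma taut3: "(\<And>v. peval v a \<Longrightarrow> peval v b \<Longrightarrow> peval v c \<Longrightarrow> peval v d) \<Longrightarrow> prov a \<Longrightarrow> prov b \<Longrightarrow> prov c \<Longrightarrow> prov d"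
  using taut_cons[of "[a,b,c]" d] by auto

lemma peval_conj_list: "peval v (conj_list xs) = (\<forall>x\<in>set xs. peval v x)"
  by (induction xs rule: conj_list.induct) auto

lemma peval_hat[simp]: "finite S \<Longrightarrow> peval v (hat S) = (\<forall>f\<in>S. peval v f)"
proof -
  assume "finite S"
  then have "\<exists>xs. set xs = S \<and> distinct xs" using finite_distinct_list by blast
  then have "set (SOME xs. set xs = S \<and> distinct xs) = S" by (metis (mono_tags, lifting) someI_ex)
  then show ?thesis by (simp add: hat_def peval_conj_list)
qed

fun bigAnd :: "'p ltl list \<Rightarrow> 'p ltl" where
  "bigAnd [] = TT"
| "bigAnd (x # xs) = And x (bigAnd xs)"

fun bigOr :: "'p ltl list \<Rightarrow> 'p ltl" where
  "bigOr [] = FF"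
| "bigOr (x # xs) = Or x (bigOr xs)"

lemma peval_bigAnd[simp]: "peval v (bigAnd xs) = (\<forall>x\<in>set xs. peval v x)"
  by (induction xs) auto
lemma peval_bigOr[simp]: "peval v (bigOr xs) = (\<exists>x\<in>set xs. peval v x)"
  by (induction xs) auto

lemma next_mono: "prov (Imp a b) \<Longrightarrow> prov (Imp (Next a) (Next b))"
proof -
  assume "prov (Imp a b)"
  then have "prov (Next (Imp a b))" by (rule prov.RT1)
  moreover have "prov (Imp (And (Next a) (Next (Imp a b))) (Next b))" by (rule prov.T1)
  ultimately show ?thesis by (rule taut2[rotated]) auto
qed

lemma next_and: "prov (Imp (And (Next a) (Next b)) (Next (And a b)))"
proof -
  have 1: "prov (Next (Imp a (Imp b (And a b))))" by (intro prov.RT1 taut0) auto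
  have 2: "prov (Imp (And (Next a) (Next (Imp a (Imp b (And a b))))) (Next (Imp b (And a b))))"
    by (rule prov.T1)
  have 3: "prov (Imp (And (Next b) (Next (Imp b (And a b)))) (Next (And a b)))"
    by (rule prov.T1)
  show ?thesis by (rule taut3[OF _ 1 2 3]) auto
qed

lemma next_conj: "(\<forall>w\<in>set ws. prov (Imp a (Next w))) \<Longrightarrow> prov (Imp a (Next (bigAnd ws)))"
proof (induction ws)
  case Nil
  have "prov (Next TT)" by (intro prov.RT1 taut0) auto
  then show ?case by (rule taut1[rotated]) auto
next
  case (Cons w ws)
  then have h1: "prov (Imp a (Next w))" and h2: "prov (Imp a (Next (bigAnd ws)))" by auto
  show ?case using taut3[OF _ h1 h2 next_and[of w "bigAnd ws"]] by auto
qed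

fun sub :: "'p ltl \<Rightarrow> 'p ltl set" where
  "sub (Prop p) = {Prop p}"
| "sub (Neg a) = insert (Neg a) (sub a)"
| "sub (And a b) = insert (And a b) (sub a \<union> sub b)"
| "sub (Next a) = insert (Next a) (sub a)"
| "sub (Until a b) = insert (Until a b) (sub a \<union> sub b)"

lemma finite_sub: "finite (sub a)"
  by (induction a) auto

lemma sub_refl: "a \<in> sub a"
  by (cases a) auto

lemma sub_trans: "x \<in> sub a \<Longrightarrow> sub x \<subseteq> sub a"
  by (induction a) auto

lemma sub_Neg: "Neg x \<in> sub a \<Longrightarrow> x \<in> sub a"
  using sub_trans sub_refl by fastforce
lemma sub_Next: "Next x \<in> sub a \<Longrightarrow> x \<in> sub a"
  using sub_trans sub_refl by fastforce
lemma sub_And1: "And x y \<in> sub a \<Longrightarrow> x \<in> sub a"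
  using sub_trans sub_refl by fastforce
lemma sub_And2: "And x y \<in> sub a \<Longrightarrow> y \<in> sub a"
  using sub_trans sub_refl by fastforce
lemma sub_Until1: "Until x y \<in> sub a \<Longrightarrow> x \<in> sub a"
  using sub_trans sub_refl by fastforce
lemma sub_Until2: "Until x y \<in> sub a \<Longrightarrow> y \<in> sub a"
  using sub_trans sub_refl by fastforce

lemmas sub_facts = sub_Neg sub_Next sub_And1 sub_And2 sub_Until1 sub_Until2

lemma Cl'_bound:
  fixes \<phi> :: "'p ltl"
  assumes b1: "\<phi> \<in> B" and b2: "Until TT (Next FF) \<in> B"
    and cN: "\<And>x. Neg x \<in> B \<Longrightarrow> x \<in> B"
    and cX: "\<And>x. Next x \<in> B \<Longrightarrow> x \<in> B"
    and cA: "\<And>x y. And x y \<in> B \<Longrightarrow> x \<in> B \<and> y \<in> B"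
    and cU: "\<And>x y. Until x y \<in> B \<Longrightarrow> x \<in> B \<and> y \<in> B"
  shows "x \<in> Cl' \<phi> \<Longrightarrow> x \<in> (B \<union> Neg ` B) \<union> Next ` (B \<union> Neg ` B) \<union> Neg ` Next ` (B \<union> Neg ` B)"
proof (induction rule: Cl'.induct)
  case base
  then show ?case using b1 by blast
next
  case fin
  then show ?case using b2 by blast
next
  case (neg \<psi>)
  then show ?case using cN by blast
next
  case (and1 \<psi>1 \<psi>2)
  then show ?case using cA by blast
next
  case (and2 \<psi>1 \<psi>2)
  then show ?case using cA by blast
next
  case (next1 \<psi>)
  then show ?case using cX by blast
next
  case (nextneg \<psi>)
  then show ?case using cX cN by blast
next
  case (until1 \<psi>1 \<psi>2)
  then show ?case using cU by blast
next
  case (until2 \<psi>1 \<psi>2)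
  then show ?case using cU by blast
next
  case (until3 \<psi>1 \<psi>2)
  then have "Until \<psi>1 \<psi>2 \<in> B" by blast
  then show ?case unfolding WNext_def by blast
qed

lemma finite_Cl': "finite (Cl' \<phi>)"
proof -
  let ?B = "sub \<phi> \<union> sub (Until TT (Next FF))"
  have "finite ?B" by (simp add: finite_sub)
  then have "finite ((?B \<union> Neg ` ?B) \<union> Next ` (?B \<union> Neg ` ?B) \<union> Neg ` Next ` (?B \<union> Neg ` ?B))"
    by simp
  moreover have "Cl' \<phi> \<subseteq> (?B \<union> Neg ` ?B) \<union> Next ` (?B \<union> Neg ` ?B) \<union> Neg ` Next ` (?B \<union> Neg ` ?B)"
    by (rule subsetI, rule Cl'_bound[of \<phi> ?B]) (auto simp: sub_refl dest: sub_facts)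
  ultimately show ?thesis by (rule finite_subset[rotated])
qed

lemma finite_Cl: "finite (Cl \<phi>)"
  by (simp add: Cl_def finite_Cl')

lemma extend:
  assumes "consistent \<psi>" "set cs \<subseteq> Cl' \<phi>"
  shows "\<exists>S. finite S \<and> S \<subseteq> Cl \<phi> \<and> (\<forall>c\<in>set cs. c \<in> S \<or> Neg c \<in> S) \<and> consistent (And \<psi> (hat S))"
  using assms(2)
proof (induction cs)
  case Nil
  have "consistent (And \<psi> (hat {}))"
    unfolding consistent_def
  proof
    assume "prov (Neg (And \<psi> (hat {})))"
    then have "prov (Neg \<psi>)" by (rule taut1[rotated]) auto
    then show False using assms(1) by (simp add: consistent_def)
  qed
  then show ?case by (intro exI[of _ "{}"]) auto
next
  case (Cons c cs)
  then obtain S where S: "finite S" "S \<subseteq> Cl \<phi>" "\<forall>c\<in>set cs. c \<in> S \<or> Neg c \<in> S"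
    "consistent (And \<psi> (hat S))" by auto
  have cCl: "c \<in> Cl \<phi>" "Neg c \<in> Cl \<phi>" using Cons.prems by (auto simp: Cl_def)
  show ?case
  proof (cases "consistent (And \<psi> (hat (insert c S)))")
    case True
    then show ?thesis using S cCl by (intro exI[of _ "insert c S"]) auto
  next
    case F1: False
    show ?thesis
    proof (cases "consistent (And \<psi> (hat (insert (Neg c) S)))")
      case True
      then show ?thesis using S cCl by (intro exI[of _ "insert (Neg c) S"]) auto
    next
      case False
      have "prov (Neg (And \<psi> (hat S)))"
        by (rule taut2[OF _ F1[unfolded consistent_def, simplified] False[unfolded consistent_def, simplified]])
          (use S(1) in auto)
      then show ?thesis using S(4) by (simp add: consistent_def)
    qed
  qed
qed

lemma atom_exists:
  assumes "consistent \<psi>"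
  shows "\<exists>W. atom \<phi> W \<and> consistent (And \<psi> (hat W))"
proof -
  obtain cs where cs: "set cs = Cl' \<phi>" using finite_Cl' finite_list by blast
  then obtain S where S: "finite S" "S \<subseteq> Cl \<phi>" "\<forall>c\<in>Cl' \<phi>. c \<in> S \<or> Neg c \<in> S"
    "consistent (And \<psi> (hat S))" using extend[OF assms, of cs \<phi>] by auto
  have cS: "consistent (hat S)"
    unfolding consistent_def
  proof
    assume "prov (Neg (hat S))"
    then have "prov (Neg (And \<psi> (hat S)))" by (rule taut1[rotated]) auto
    then show False using S(4) by (simp add: consistent_def)
  qed
  have max: "\<not> consistent_set W" if W: "S \<subset> W" "W \<subseteq> Cl \<phi>" for W
  proof
    assume cW: "consistent_set W"
    then have fW: "finite W" by (simp add: consistent_set_def)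
    obtain x where x: "x \<in> W" "x \<notin> S" using W by blast
    have "\<exists>y. y \<in> W \<and> Neg y \<in> W"
    proof (cases "x \<in> Cl' \<phi>")
      case True
      then show ?thesis using S(3) x W by blast
    next
      case False
      then obtain c where "x = Neg c" "c \<in> Cl' \<phi>" using x W by (auto simp: Cl_def)
      then show ?thesis using S(3) x W by blast
    qed
    then obtain y where y: "y \<in> W" "Neg y \<in> W" by blast
    have "\<not> peval v (hat W)" for v
    proof
      assume "peval v (hat W)"
      then have a: "\<forall>f\<in>W. peval v f" using peval_hat[OF fW, of v] by simp
      have "peval v y" using a y(1) by blast
      moreover have "peval v (Neg y)" using a y(2) by blast
      ultimately show False by simp
    qed
    then have "prov (Neg (hat W))" by (intro taut0) simp
    then show False using cW by (simp add: consistent_set_def consistent_def)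
  qed
  have "atom \<phi> S" using S(1,2) cS max by (auto simp: atom_def consistent_set_def)
  then show ?thesis using S(4) by blast
qed

lemma atom_finite: "atom \<phi> W \<Longrightarrow> finite W"
  by (simp add: atom_def consistent_set_def)

lemma atom_compl:
  assumes a: "atom \<phi> W" and c: "c \<in> Cl' \<phi>"
  shows "c \<in> W \<or> Neg c \<in> W"
proof (rule ccontr)
  assume n: "\<not> (c \<in> W \<or> Neg c \<in> W)"
  have fW: "finite W" using a atom_finite by blast
  have "insert c W \<subseteq> Cl \<phi>" "insert (Neg c) W \<subseteq> Cl \<phi>" using a c by (auto simp: atom_def Cl_def)
  moreover have "W \<subset> insert c W" "W \<subset> insert (Neg c) W" using n by auto
  ultimately have "\<not> consistent_set (insert c W)" "\<not> consistent_set (insert (Neg c) W)"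
    using a unfolding atom_def by blast+
  then have p1: "prov (Neg (hat (insert c W)))" and p2: "prov (Neg (hat (insert (Neg c) W)))"
    using fW by (auto simp: consistent_set_def consistent_def)
  have "prov (Neg (hat W))" by (rule taut2[OF _ p1 p2]) (use fW in auto)
  then show False using a by (simp add: atom_def consistent_set_def consistent_def)
qed

theorem lemma1:
  fixes \<phi> :: "'p ltl" and V0 :: "'p ltl set"
  assumes "atom \<phi> V0"
  shows "\<exists>(k::nat) (V :: nat \<Rightarrow> 'p ltl set). V 0 = V0 \<and> (\<forall>i\<le>k. atom \<phi> (V i))
           \<and> (\<forall>i<k. arrow (V i) (V (Suc i))) \<and> Next FF \<in> V k"
proof (rule ccontr)
  assume H: "\<not> ?thesis"
  define R where "R = {W. \<exists>k V. V 0 = V0 \<and> (\<forall>i\<le>k. atom \<phi> (V i))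
           \<and> (\<forall>i<k. arrow (V i) (V (Suc i))) \<and> V k = W}"
  have V0R: "V0 \<in> R" unfolding R_def using assms
    by (intro CollectI exI[of _ 0] exI[of _ "\<lambda>_. V0"]) auto
  have Ratom: "atom \<phi> W" if "W \<in> R" for W using that unfolding R_def by auto
  have RnoFF: "Next FF \<notin> W" if WR: "W \<in> R" for W
  proof
    assume W: "Next FF \<in> W"
    obtain k V where kV: "V 0 = V0" "\<forall>i\<le>k. atom \<phi> (V i)" "\<forall>i<k. arrow (V i) (V (Suc i))" "V k = W"
      using WR unfolding R_def mem_Collect_eq by (elim exE conjE)
    have "\<exists>(k::nat) (V :: nat \<Rightarrow> 'p ltl set). V 0 = V0 \<and> (\<forall>i\<le>k. atom \<phi> (V i))
           \<and> (\<forall>i<k. arrow (V i) (V (Suc i))) \<and> Next FF \<in> V k"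
      using kV W by (intro exI[of _ k] exI[of _ V]) simp
    then show False using H by (rule notE[rotated])
  qed
  have Rclosed: "W' \<in> R" if hh: "W \<in> R" "atom \<phi> W'" "arrow W W'" for W W'
  proof -
    obtain k V where kV: "V 0 = V0" "\<forall>i\<le>k. atom \<phi> (V i)" "\<forall>i<k. arrow (V i) (V (Suc i))" "V k = W"
      using hh(1) unfolding R_def mem_Collect_eq by (elim exE conjE)
    let ?V = "V(Suc k := W')"
    have "?V 0 = V0" using kV by simp
    moreover have "\<forall>i\<le>Suc k. atom \<phi> (?V i)" using kV hh(2) by (auto simp: le_Suc_eq)
    moreover have "\<forall>i<Suc k. arrow (?V i) (?V (Suc i))" using kV hh(3) by (auto simp: less_Suc_eq)
    moreover have "?V (Suc k) = W'" by simp
    ultimately show ?thesis unfolding R_def by blast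
  qed
  define A where "A = {W. atom \<phi> W}"
  have "A \<subseteq> Pow (Cl \<phi>)" by (auto simp: A_def atom_def)
  then have fA: "finite A" using finite_Cl by (meson finite_Pow_iff finite_subset)
  have RA: "R \<subseteq> A" using Ratom by (auto simp: A_def)
  then have fR: "finite R" using fA finite_subset by blast
  obtain Rl where Rl: "set Rl = R" using fR finite_list by blast
  obtain Nl where Nl: "set Nl = A - R" using fA finite_list by blast
  define P where "P = bigOr (map hat Rl)"
  define N where "N = bigAnd (map (\<lambda>W. Neg (hat W)) Nl)"
  have D: "prov (Imp N P)"
  proof (rule ccontr)
    assume nD: "\<not> prov (Imp N P)"
    have "consistent (Neg (Imp N P))"
      unfolding consistent_def
    proof
      assume "prov (Neg (Neg (Imp N P)))"
      then have "prov (Imp N P)" by (rule taut1[rotated]) auto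
      then show False using nD by simp
    qed
    then obtain W where W: "atom \<phi> W" "consistent (And (Neg (Imp N P)) (hat W))"
      using atom_exists by blast
    have fW: "finite W" using W(1) atom_finite by blast
    have "prov (Neg (And (Neg (Imp N P)) (hat W)))"
    proof (cases "W \<in> R")
      case True
      then have "peval v P" if "peval v (hat W)" for v
        using that Rl unfolding P_def peval_bigOr set_map by blast
      then show ?thesis by (intro taut0) (simp del: peval_hat; blast)
    next
      case False
      then have "W \<in> set Nl" using Nl W(1) by (auto simp: A_def)
      then show ?thesis by (intro taut0) (auto simp: N_def simp del: peval_hat)
    qed
    then show False using W(2) by (simp add: consistent_def)
  qed
  have NFFCl: "Next FF \<in> Cl' \<phi>" using Cl'.fin Cl'.until2 by blast
  have step: "prov (Imp (hat V) (And (Neg (Next FF)) (Next P)))" if V: "V \<in> R" for V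
  proof -
    have fV: "finite V" using V Ratom atom_finite by blast
    have "\<forall>w\<in>set (map (\<lambda>W. Neg (hat W)) Nl). prov (Imp (hat V) (Next w))"
    proof
      fix w assume "w \<in> set (map (\<lambda>W. Neg (hat W)) Nl)"
      then obtain W where W: "W \<in> A - R" "w = Neg (hat W)" using Nl by auto
      then have "\<not> arrow V W" using Rclosed V by (auto simp: A_def)
      then have "prov (Neg (And (hat V) (WNext (hat W))))" by (simp add: arrow_def consistent_def)
      then show "prov (Imp (hat V) (Next w))" using W(2) by (rule_tac taut1[rotated]) (auto simp: WNext_def)
    qed
    then have 1: "prov (Imp (hat V) (Next N))" unfolding N_def by (rule next_conj)
    have 2: "prov (Imp (Next N) (Next P))" using D by (rule next_mono)
    have "Neg (Next FF) \<in> V" using atom_compl[OF Ratom[OF V] NFFCl] RnoFF[OF V] by blast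
    then have 3: "prov (Imp (hat V) (Neg (Next FF)))" using fV by (intro taut0) auto
    show ?thesis by (rule taut3[OF _ 1 2 3]) auto
  qed
  have "prov (Imp P (And (Neg (Next FF)) (Next P)))"
  proof (rule taut_cons[of "map (\<lambda>V. Imp (hat V) (And (Neg (Next FF)) (Next P))) Rl"])
    fix v assume "\<forall>f\<in>set (map (\<lambda>V. Imp (hat V) (And (Neg (Next FF)) (Next P))) Rl). peval v f"
    then show "peval v (Imp P (And (Neg (Next FF)) (Next P)))" by (auto simp: P_def)
  next
    show "\<forall>f\<in>set (map (\<lambda>V. Imp (hat V) (And (Neg (Next FF)) (Next P))) Rl). prov f"
      using step Rl by auto
  qed
  then have r: "prov (Imp P (Neg (Until TT (Next FF))))" by (rule prov.RT2)
  have f: "prov (Until TT (Next FF))" using prov.Fin by (simp add: Ev_def)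
  have fV0: "finite V0" using assms atom_finite by blast
  have "peval v P" if "peval v (hat V0)" for v
    using that Rl V0R unfolding P_def peval_bigOr set_map by blast
  then have "prov (Neg (hat V0))" by (intro taut2[OF _ r f]) (simp del: peval_hat; blast)
  then show False using assms by (simp add: atom_def consistent_set_def consistent_def)
qed

end
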